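(* Assume the setting below and one of: (g) general missingness ($M_i(1),M_i(0)\in\{0,1\}$ arbitrary constants, possibly depending on the potential outcomes); (mp) $M_i(1)\ge M_i(0)$ for all $i$; (mn) $M_i(1)\le M_i(0)$ for all $i$. For $\boldsymbol\delta\in\mathbb R^n$ define $\tilde{\boldsymbol Y}^{\square}_{\boldsymbol Z,\boldsymbol\delta}(0)\in\overline{\mathbb R}^n$, $\square\in\{\texttt g,\texttt{mp},\texttt{mn}\}$, coordinatewise by: for $Z_i=1,M_i=1$ all three equal $Y_i-\delta_i$; for $Z_i=0,M_i=1$ all three equal $Y_i$; for $Z_i=1,M_i=0$ they equal $-\infty$ ($\texttt g$), $+\infty$ ($\texttt{mp}$), $-\infty$ ($\texttt{mn}$); for $Z_i=0,M_i=0$ they equal $+\infty$ ($\texttt g$), $+\infty$ ($\texttt{mp}$), $-\infty$ ($\texttt{mn}$). Let $\mathcal J=\{i:Z_i=M_i=1\}$, $n_{11}=|\mathcal J|$, and write $\mathcal J=\{j_1,\dots,j_{n_{11}}\}$ with $\psi_{j_{l+1},j_l}(Y_{j_{l+1}},Y_{j_l})=1$ for $1\le l<n_{11}$; for $1\le L\le n_{11}$ let $\mathcal J_L=\{j_{n_{11}-L+1},\dots,j_{n_{11}}\}$ and $\mathcal J_0=\emptyset$. Fix $\kappa>0$. For $1\le k\le n_1$, $c\in\mathbb R$ define $\boldsymbol\xi_{k,c}\in\mathbb R^n$ by $\xi_{k,c,i}=\max_{l:Z_l=M_l=1}Y_l-\min_{l:Z_l=0,M_l=1}Y_l+\kappa$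 if $i\in\mathcal J_{\min\{n_1-k,n_{11}\}}$ and $\xi_{k,c,i}=c$ otherwise. Then, with $\square$ the label of the assumed mechanism, $$\tilde p^{\square}_{\texttt t,k,c}:=G_{\mathrm R,\phi}\big(t_{\mathrm R,\phi}(\boldsymbol Z,\tilde{\boldsymbol Y}^{\square}_{\boldsymbol Z,\boldsymbol\xi_{k,c}}(0))\big)$$ is a valid p-value for $H^{\texttt t}_{k,c}:\sum_{i=1}^nZ_i\mathbf 1\{\tau_i>c\}\le n_1-k$ (equivalently, the $k$-th smallest individual effect among treated units is $\le c$), in the sense that $\mathbb P\big(\tilde p^{\square}_{\texttt t,k,c}\le\alpha\text{ and }H^{\texttt t}_{k,c}\text{ holds}\big)\le\alpha$ for all $\alpha\in(0,1)$.
   Context: There are $n$ units. Unit $i$ has fixed potential outcomes $Y_i^\star(0),Y_i^\star(1)\in\mathbb R$ and fixed potential missingness indicators $M_i(0),M_i(1)\in\{0,1\}$; $\tau_i=Y_i^\star(1)-Y_i^\star(0)$. The assignment $\boldsymbol Z\in\{0,1\}^n$ is drawn from a completely randomized experiment (CRE): for fixed positive integers $n_1,n_0$, $n_1+n_0=n$, $\boldsymbol Z$ is uniform over vectors in $\{0,1\}^n$ with exactly $n_1$ ones, independently of all potential outcomes and missingness indicators; probabilities are over $\boldsymbol Z$. Observed missingness $M_i=Z_iM_i(1)+(1-Z_i)M_i(0)$; the realized outcome $Z_iY_i^\star(1)+(1-Z_i)Y_i^\star(0)$ is observed, and denoted $Y_i$, only when $M_i=1$. The null $H^{\texttt t}_{k,c}$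 is an event depending on $\boldsymbol Z$. $\overline{\mathbb R}=\mathbb R\cup\{\pm\infty\}$; $\psi_{i,j}(y,y')=\mathbf 1\{y>y'\}+\mathbf 1\{y=y'\}\mathbf 1\{i\ge j\}$; $\mathrm{rank}_i(\boldsymbol y)=\sum_j\psi_{i,j}(y_i,y_j)$. $\phi$ is a fixed nondecreasing real function on the nonnegative integers. $t_{\mathrm R,\phi}(\boldsymbol z,\boldsymbol y)$ is either $\sum_i z_i\phi(\mathrm{rank}_i(\boldsymbol y))$ or $\sum_i z_i\phi\big(\sum_j(1-z_j)\psi_{i,j}(y_i,y_j)\big)$; the result holds for either. $G_{\mathrm R,\phi}(c)=\mathbb P(t_{\mathrm R,\phi}(\boldsymbol A,\boldsymbol y_0)\ge c)$ with $\boldsymbol A$ from the CRE and $\boldsymbol y_0\in\mathbb R^n$ any fixed vector (independent of $\boldsymbol y_0$). *)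

theory Defs
  imports Main "HOL-Library.Extended_Real"
begin

text \<open>Units are indexed by {0..<n}. An assignment is the set of treated units.\<close>

datatype mechanism = Mech_g | Mech_mp | Mech_mn

datatype stat_form = Rank_All | Rank_Ctrl

definition psi :: "nat \<Rightarrow> nat \<Rightarrow> 'a::linorder \<Rightarrow> 'a \<Rightarrow> nat" where
  "psi i j y y' = (if y > y' then 1 else if y = y' \<and> i \<ge> j then 1 else 0)"

definition rank :: "nat \<Rightarrow> (nat \<Rightarrow> 'a::linorder) \<Rightarrow> nat \<Rightarrow> nat" where
  "rank n y i = (\<Sum>j<n. psi i j (y i) (y j))"

definition tstat :: "stat_form \<Rightarrow> (nat \<Rightarrow> real) \<Rightarrow> nat \<Rightarrow> nat set \<Rightarrow> (nat \<Rightarrow> 'a::linorder) \<Rightarrow> real" where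
  "tstat form phi n Z y =
     (case form of
        Rank_All \<Rightarrow> (\<Sum>i\<in>{..<n} \<inter> Z. phi (rank n y i))
      | Rank_Ctrl \<Rightarrow> (\<Sum>i\<in>{..<n} \<inter> Z. phi (\<Sum>j\<in>{..<n} - Z. psi i j (y i) (y j))))"

definition cre_space :: "nat \<Rightarrow> nat \<Rightarrow> nat set set" where
  "cre_space n n1 = {Z. Z \<subseteq> {..<n} \<and> card Z = n1}"

definition prob_cre :: "nat \<Rightarrow> nat \<Rightarrow> (nat set \<Rightarrow> bool) \<Rightarrow> real" where
  "prob_cre n n1 P = real (card {Z \<in> cre_space n n1. P Z}) / real (card (cre_space n n1))"

text \<open>Null distribution tail G_{R,phi}(c), computed at a fixed real vector y0.\<close>
definition G_tail :: "stat_form \<Rightarrow> (nat \<Rightarrow> real) \<Rightarrow> nat \<Rightarrow> nat \<Rightarrow> (nat \<Rightarrow> real) \<Rightarrow> real \<Rightarrow> real" where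
  "G_tail form phi n n1 y0 c = prob_cre n n1 (\<lambda>A. tstat form phi n A (\<lambda>i. ereal (y0 i)) \<ge> c)"

text \<open>Observed missingness indicator M_i (True = outcome observed) and realized outcome.\<close>
definition obsM :: "(nat \<Rightarrow> bool) \<Rightarrow> (nat \<Rightarrow> bool) \<Rightarrow> nat set \<Rightarrow> nat \<Rightarrow> bool" where
  "obsM M1 M0 Z i = (if i \<in> Z then M1 i else M0 i)"

definition obsY :: "(nat \<Rightarrow> real) \<Rightarrow> (nat \<Rightarrow> real) \<Rightarrow> nat set \<Rightarrow> nat \<Rightarrow> real" where
  "obsY Y1 Y0 Z i = (if i \<in> Z then Y1 i else Y0 i)"

definition Ytilde :: "mechanism \<Rightarrow> (nat \<Rightarrow> real) \<Rightarrow> (nat \<Rightarrow> real) \<Rightarrow> (nat \<Rightarrow> bool) \<Rightarrow> (nat \<Rightarrow> bool)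
    \<Rightarrow> nat set \<Rightarrow> (nat \<Rightarrow> real) \<Rightarrow> nat \<Rightarrow> ereal" where
  "Ytilde mech Y1 Y0 M1 M0 Z delta i =
     (if i \<in> Z then
        (if obsM M1 M0 Z i then ereal (obsY Y1 Y0 Z i - delta i)
         else (case mech of Mech_g \<Rightarrow> MInfty | Mech_mp \<Rightarrow> PInfty | Mech_mn \<Rightarrow> MInfty))
      else
        (if obsM M1 M0 Z i then ereal (obsY Y1 Y0 Z i)
         else (case mech of Mech_g \<Rightarrow> PInfty | Mech_mp \<Rightarrow> PInfty | Mech_mn \<Rightarrow> MInfty)))"

definition Jset :: "nat \<Rightarrow> (nat \<Rightarrow> bool) \<Rightarrow> (nat \<Rightarrow> bool) \<Rightarrow> nat set \<Rightarrow> nat set" where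
  "Jset n M1 M0 Z = {i. i < n \<and> i \<in> Z \<and> obsM M1 M0 Z i}"

text \<open>J_L: the L last elements of J in the order j_1,...,j_{n11} (increasing in (Y, index)),
  i.e. the elements whose position (rank within J) exceeds n11 - L.\<close>
definition JL :: "nat \<Rightarrow> (nat \<Rightarrow> real) \<Rightarrow> (nat \<Rightarrow> real) \<Rightarrow> (nat \<Rightarrow> bool) \<Rightarrow> (nat \<Rightarrow> bool)
    \<Rightarrow> nat set \<Rightarrow> nat \<Rightarrow> nat set" where
  "JL n Y1 Y0 M1 M0 Z L =
     (let J = Jset n M1 M0 Z; Y = obsY Y1 Y0 Z in
      {i \<in> J. (\<Sum>j\<in>J. psi i j (Y i) (Y j)) > card J - L})"

definition xi :: "nat \<Rightarrow> nat \<Rightarrow> (nat \<Rightarrow> real) \<Rightarrow> (nat \<Rightarrow> real) \<Rightarrow> (nat \<Rightarrow> bool) \<Rightarrow> (nat \<Rightarrow> bool)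
    \<Rightarrow> nat set \<Rightarrow> real \<Rightarrow> nat \<Rightarrow> real \<Rightarrow> nat \<Rightarrow> real" where
  "xi n n1 Y1 Y0 M1 M0 Z kappa k c i =
     (let J = Jset n M1 M0 Z; Y = obsY Y1 Y0 Z in
      if i \<in> JL n Y1 Y0 M1 M0 Z (min (n1 - k) (card J))
      then Max (Y ` J) - Min (Y ` {l. l < n \<and> l \<notin> Z \<and> obsM M1 M0 Z l}) + kappa
      else c)"

definition pval :: "stat_form \<Rightarrow> (nat \<Rightarrow> real) \<Rightarrow> mechanism \<Rightarrow> nat \<Rightarrow> nat \<Rightarrow> (nat \<Rightarrow> real)
    \<Rightarrow> (nat \<Rightarrow> real) \<Rightarrow> (nat \<Rightarrow> real) \<Rightarrow> (nat \<Rightarrow> bool) \<Rightarrow> (nat \<Rightarrow> bool) \<Rightarrow> real \<Rightarrow> nat \<Rightarrow> real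
    \<Rightarrow> nat set \<Rightarrow> real" where
  "pval form phi mech n n1 y0 Y1 Y0 M1 M0 kappa k c Z =
     G_tail form phi n n1 y0
       (tstat form phi n Z (Ytilde mech Y1 Y0 M1 M0 Z (xi n n1 Y1 Y0 M1 M0 Z kappa k c)))"

definition Hnull :: "nat \<Rightarrow> nat \<Rightarrow> (nat \<Rightarrow> real) \<Rightarrow> (nat \<Rightarrow> real) \<Rightarrow> nat \<Rightarrow> real \<Rightarrow> nat set \<Rightarrow> bool" where
  "Hnull n n1 Y1 Y0 k c Z \<longleftrightarrow> card {i. i < n \<and> i \<in> Z \<and> Y1 i - Y0 i > c} \<le> n1 - k"

end

theory Submission
  imports Defs
begin



definition prec :: "(nat \<Rightarrow> 'a::linorder) \<Rightarrow> nat \<Rightarrow> nat \<Rightarrow> bool" where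
  "prec y j i \<longleftrightarrow> y j < y i \<or> (y j = y i \<and> j \<le> i)"

definition rk :: "nat set \<Rightarrow> (nat \<Rightarrow> 'a::linorder) \<Rightarrow> nat \<Rightarrow> nat" where
  "rk S y i = card {j\<in>S. prec y j i}"

lemma psi_prec: "psi i j (y i) (y j) = (if prec y j i then 1 else 0)"
  by (auto simp: psi_def prec_def)

lemma sum_psi: "finite S \<Longrightarrow> (\<Sum>j\<in>S. psi i j (y i) (y j)) = card {j\<in>S. prec y j i}"
  by (simp add: psi_prec sum.If_cases Int_def)

lemma prec_refl: "prec y i i" by (simp add: prec_def)
lemma prec_trans: "prec y i j \<Longrightarrow> prec y j k \<Longrightarrow> prec y i k"
  by (auto simp: prec_def)
lemma prec_antisym: "prec y i j \<Longrightarrow> prec y j i \<Longrightarrow> i = j"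
  by (auto simp: prec_def)
lemma prec_total: "\<not> prec y i j \<Longrightarrow> prec y j i"
  by (auto simp: prec_def)

lemma rk_mono: "finite S \<Longrightarrow> prec y i i' \<Longrightarrow> rk S y i \<le> rk S y i'"
  unfolding rk_def by (rule card_mono) (auto intro: prec_trans)

lemma rk_less: assumes "finite S" "i' \<in> S" "prec y i i'" "i \<noteq> i'"
  shows "rk S y i < rk S y i'"
  unfolding rk_def
proof (rule psubset_card_mono)
  show "finite {j \<in> S. prec y j i'}" using assms by simp
  have "i' \<notin> {j \<in> S. prec y j i}" using assms prec_antisym by blast
  moreover have "i' \<in> {j \<in> S. prec y j i'}" using assms prec_refl by blast
  ultimately show "{j \<in> S. prec y j i} \<subset> {j \<in> S. prec y j i'}"
    using assms by (auto intro: prec_trans)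
qed

lemma rk_le_iff: "finite S \<Longrightarrow> i \<in> S \<Longrightarrow> i' \<in> S \<Longrightarrow> rk S y i \<le> rk S y i' \<longleftrightarrow> prec y i i'"
  using rk_less[of S i y i'] rk_mono[of S y i i'] prec_total[of y i i'] by force

lemma rk_inj: assumes "finite S" shows "inj_on (rk S y) S"
proof (rule inj_onI)
  fix i i' assume "i \<in> S" "i' \<in> S" "rk S y i = rk S y i'"
  thus "i = i'" using assms rk_le_iff[of S i i' y] rk_le_iff[of S i' i y] prec_antisym by force
qed

lemma rk_range: "finite S \<Longrightarrow> i \<in> S \<Longrightarrow> rk S y i \<in> {1..card S}"
proof -
  assume a: "finite S" "i \<in> S"
  have "i \<in> {j\<in>S. prec y j i}" using a prec_refl by blast
  hence "card {j\<in>S. prec y j i} \<noteq> 0" using a by auto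
  hence "card {j\<in>S. prec y j i} \<ge> 1" by linarith
  moreover have "card {j\<in>S. prec y j i} \<le> card S" using a by (intro card_mono) auto
  ultimately show ?thesis by (simp add: rk_def)
qed

lemma rk_bij: "finite S \<Longrightarrow> bij_betw (rk S y) S {1..card S}"
proof -
  assume f: "finite S"
  have "inj_on (rk S y) S" using rk_inj f .
  moreover have "rk S y ` S \<subseteq> {1..card S}" using rk_range f by blast
  moreover have "card (rk S y ` S) = card {1..card S}" using calculation card_image by auto
  ultimately show ?thesis
    by (simp add: bij_betw_def card_subset_eq)
qed




lemma tail_rep:
  fixes phi :: "nat \<Rightarrow> real"
  assumes "finite Z" "\<forall>i\<in>Z. h i \<le> N"
  shows "(\<Sum>i\<in>Z. phi (h i)) = real (card Z) * phi 0
          + (\<Sum>r<N. (phi (Suc r) - phi r) * real (card {i\<in>Z. r < h i}))"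
proof -
  have rep: "phi m = phi 0 + (\<Sum>r<N. if r < m then phi (Suc r) - phi r else 0)" if "m \<le> N" for m
  proof -
    have "(\<Sum>r<N. if r < m then phi (Suc r) - phi r else 0) = (\<Sum>r\<in>{..<N} \<inter> {r. r < m}. phi (Suc r) - phi r)"
      by (simp add: sum.If_cases)
    also have "{..<N} \<inter> {r. r < m} = {..<m}" using that by auto
    also have "(\<Sum>r<m. phi (Suc r) - phi r) = phi m - phi 0" by (rule sum_lessThan_telescope)
    finally show ?thesis by simp
  qed
  have "(\<Sum>i\<in>Z. phi (h i)) = (\<Sum>i\<in>Z. phi 0 + (\<Sum>r<N. if r < h i then phi (Suc r) - phi r else 0))"
  proof (rule sum.cong)
    fix i assume "i \<in> Z"
    thus "phi (h i) = phi 0 + (\<Sum>r<N. if r < h i then phi (Suc r) - phi r else 0)"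
      using assms(2) by (intro rep) auto
  qed simp
  also have "\<dots> = real (card Z) * phi 0 + (\<Sum>i\<in>Z. \<Sum>r<N. if r < h i then phi (Suc r) - phi r else 0)"
    by (simp add: sum.distrib)
  also have "(\<Sum>i\<in>Z. \<Sum>r<N. if r < h i then phi (Suc r) - phi r else 0)
      = (\<Sum>r<N. \<Sum>i\<in>Z. if r < h i then phi (Suc r) - phi r else 0)" by (rule sum.swap)
  also have "\<dots> = (\<Sum>r<N. (phi (Suc r) - phi r) * real (card {i\<in>Z. r < h i}))"
  proof (rule sum.cong)
    fix r
    have "(\<Sum>i\<in>Z. if r < h i then phi (Suc r) - phi r else 0) = (\<Sum>i\<in>{i\<in>Z. r < h i}. phi (Suc r) - phi r)"
      using assms(1) by (rule sum.inter_filter[symmetric])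
    thus "(\<Sum>i\<in>Z. if r < h i then phi (Suc r) - phi r else 0) = (phi (Suc r) - phi r) * real (card {i\<in>Z. r < h i})"
      by (simp add: mult.commute)
  qed simp
  finally show ?thesis .
qed

lemma tail_sum:
  fixes phi :: "nat \<Rightarrow> real"
  assumes "finite Z" "mono phi" "\<And>r. card {i\<in>Z. r < f i} \<le> card {i\<in>Z. r < g i}"
  shows "(\<Sum>i\<in>Z. phi (f i)) \<le> (\<Sum>i\<in>Z. phi (g i))"
proof -
  define N where "N = Max (insert 0 ((f ` Z) \<union> (g ` Z)))"
  have fN: "\<forall>i\<in>Z. f i \<le> N" and gN: "\<forall>i\<in>Z. g i \<le> N"
    unfolding N_def using assms(1) by (auto intro: Max_ge)
  have "(\<Sum>r<N. (phi (Suc r) - phi r) * real (card {i\<in>Z. r < f i}))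
        \<le> (\<Sum>r<N. (phi (Suc r) - phi r) * real (card {i\<in>Z. r < g i}))"
  proof (rule sum_mono)
    fix r
    have "phi r \<le> phi (Suc r)" using assms(2) by (simp add: monoD)
    thus "(phi (Suc r) - phi r) * real (card {i\<in>Z. r < f i}) \<le> (phi (Suc r) - phi r) * real (card {i\<in>Z. r < g i})"
      using assms(3)[of r] by (intro mult_left_mono) auto
  qed
  thus ?thesis using tail_rep[OF assms(1) fN, of phi] tail_rep[OF assms(1) gN, of phi] by linarith
qed




lemma all_count:
  fixes a b a' b' :: "nat \<Rightarrow> nat"
  assumes fin: "finite Z"
    and ba: "bij_betw a Z {1..card Z}" and ba': "bij_betw a' Z {1..card Z}"
    and co: "\<And>i i'. i\<in>Z \<Longrightarrow> i'\<in>Z \<Longrightarrow> a i \<le> a i' \<Longrightarrow> b i \<le> b i'"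
    and co': "\<And>i i'. i\<in>Z \<Longrightarrow> i'\<in>Z \<Longrightarrow> a' i \<le> a' i' \<Longrightarrow> b' i \<le> b' i'"
    and td: "\<And>v. card {i\<in>Z. b' i < v} \<le> card {i\<in>Z. b i < v}"
  shows "card {i\<in>Z. a' i + b' i \<le> r} \<le> card {i\<in>Z. a i + b i \<le> r}"
proof -
  define S' where "S' = {i\<in>Z. a' i + b' i \<le> r}"
  define K where "K = card S'"
  show ?thesis
  proof (cases "S' = {}")
    case True
    hence "card {i\<in>Z. a' i + b' i \<le> r} = 0" by (simp only: S'_def[symmetric] card.empty)
    thus ?thesis by simp
  next
    case False
    have finS': "finite S'" using fin S'_def by simp
    have S'Z: "S' \<subseteq> Z" unfolding S'_def by auto
    have "Max (a' ` S') \<in> a' ` S'" using finS' False by (intro Max_in) auto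
    then obtain u where u: "u \<in> S'" "a' u = Max (a' ` S')" by auto
    have umax: "\<forall>s\<in>S'. a' s \<le> a' u" using u finS' by auto
    have injS': "inj_on a' S'" using inj_on_subset[OF bij_betw_imp_inj_on[OF ba'] S'Z] .
    have "a' ` S' \<subseteq> {1..a' u}"
    proof
      fix x assume "x \<in> a' ` S'"
      then obtain s where s: "s \<in> S'" "x = a' s" by auto
      have "a' s \<in> {1..card Z}" using bij_betwE[OF ba'] s S'Z by blast
      thus "x \<in> {1..a' u}" using s umax by auto
    qed
    hence "card (a' ` S') \<le> a' u" using card_mono[of "{1..a' u}" "a' ` S'"] by simp
    hence Ku: "K \<le> a' u" using card_image[OF injS'] K_def by simp
    have bnd: "\<forall>s\<in>S'. b' s + K \<le> r"
    proof
      fix s assume s: "s \<in> S'"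
      have "b' s \<le> b' u" using co'[of s u] s u umax S'Z by auto
      moreover have "a' u + b' u \<le> r" using u S'_def by auto
      ultimately show "b' s + K \<le> r" using Ku by linarith
    qed
    have "b' u + K \<le> r" using bnd u(1) by blast
    hence Kr: "K \<le> r" by linarith
    have Kpos: "K > 0" using False finS' K_def by (simp add: card_gt_0_iff)
    have "S' \<subseteq> {i\<in>Z. b' i < r + 1 - K}"
    proof
      fix s assume s: "s \<in> S'"
      hence "b' s + K \<le> r" "s \<in> Z" using bnd S'Z by auto
      thus "s \<in> {i\<in>Z. b' i < r + 1 - K}" by simp
    qed
    hence "K \<le> card {i\<in>Z. b' i < r + 1 - K}" unfolding K_def using fin by (intro card_mono) auto
    also have "\<dots> \<le> card {i\<in>Z. b i < r + 1 - K}" by (rule td)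
    finally have KW: "K \<le> card {i\<in>Z. b i < r + 1 - K}" .
    define W where "W = {i\<in>Z. b i < r + 1 - K}"
    have W_iff: "\<And>i. i \<in> W \<longleftrightarrow> i \<in> Z \<and> b i + K \<le> r" unfolding W_def using Kr by auto
    define T where "T = {i\<in>Z. a i \<le> K}"
    have KZ: "K \<le> card Z" unfolding K_def using card_mono[OF fin S'Z] .
    have "{1..K} \<subseteq> a ` T"
    proof
      fix x assume x: "x \<in> {1..K}"
      hence "x \<in> {1..card Z}" using KZ by auto
      hence "x \<in> a ` Z" using bij_betw_imp_surj_on[OF ba] by simp
      then obtain i where "i \<in> Z" "a i = x" by auto
      thus "x \<in> a ` T" using x T_def by auto
    qed
    hence "K \<le> card (a ` T)" using card_mono[of "a ` T" "{1..K}"] fin T_def by simp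
    also have "\<dots> \<le> card T" using fin T_def by (intro card_image_le) simp
    finally have KT: "K \<le> card T" .
    have "T \<subseteq> {i\<in>Z. a i + b i \<le> r}"
    proof
      fix t assume t: "t \<in> T"
      have "\<exists>w\<in>W. a t \<le> a w"
      proof (rule ccontr)
        assume "\<not> (\<exists>w\<in>W. a t \<le> a w)"
        hence lt: "\<forall>w\<in>W. a w < a t" by auto
        have "a ` W \<subseteq> {1..<K}"
        proof
          fix x assume "x \<in> a ` W"
          then obtain w where w: "w \<in> W" "x = a w" by auto
          have "w \<in> Z" using w W_def by auto
          hence "a w \<in> {1..card Z}" using bij_betwE[OF ba] by blast
          moreover have "a t \<le> K" using t T_def by simp
          moreover have "a w < a t" using lt w by blast
          ultimately show "x \<in> {1..<K}" using w by simp
        qed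
        hence "card (a ` W) \<le> K - 1" using card_mono[of "{1..<K}" "a ` W"] by simp
        moreover have "W \<subseteq> Z" using W_def by auto
        hence "inj_on a W" using inj_on_subset[OF bij_betw_imp_inj_on[OF ba]] by blast
        hence "card (a ` W) = card W" by (rule card_image)
        ultimately have "card W \<le> K - 1" by simp
        thus False using KW W_def Kpos by simp
      qed
      then obtain w where w: "w \<in> W" "a t \<le> a w" by auto
      have "b t \<le> b w" using co[of t w] w t T_def W_def by auto
      thus "t \<in> {i\<in>Z. a i + b i \<le> r}" using w W_iff t T_def by auto
    qed
    hence "card T \<le> card {i\<in>Z. a i + b i \<le> r}" using fin by (intro card_mono) auto
    thus ?thesis using KT K_def S'_def by simp
  qed
qed




lemma card_split: "finite Z \<Longrightarrow> card {i\<in>Z. P i} + card {i\<in>Z. \<not> P i} = card Z"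
proof -
  assume f: "finite Z"
  have "Z = {i\<in>Z. P i} \<union> {i\<in>Z. \<not> P i}" by auto
  moreover have "card ({i\<in>Z. P i} \<union> {i\<in>Z. \<not> P i}) = card {i\<in>Z. P i} + card {i\<in>Z. \<not> P i}"
    using f by (intro card_Un_disjoint) auto
  ultimately show ?thesis by simp
qed

lemma stat_compare:
  fixes a b a' b' :: "nat \<Rightarrow> nat" and phi :: "nat \<Rightarrow> real"
  assumes fin: "finite Z" and mono: "mono phi"
    and ba: "bij_betw a Z {1..card Z}" and ba': "bij_betw a' Z {1..card Z}"
    and co: "\<And>i i'. i\<in>Z \<Longrightarrow> i'\<in>Z \<Longrightarrow> a i \<le> a i' \<Longrightarrow> b i \<le> b i'"
    and co': "\<And>i i'. i\<in>Z \<Longrightarrow> i'\<in>Z \<Longrightarrow> a' i \<le> a' i' \<Longrightarrow> b' i \<le> b' i'"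
    and td: "\<And>v. card {i\<in>Z. v \<le> b i} \<le> card {i\<in>Z. v \<le> b' i}"
  shows "(\<Sum>i\<in>Z. phi (b i)) \<le> (\<Sum>i\<in>Z. phi (b' i))"
    and "(\<Sum>i\<in>Z. phi (a i + b i)) \<le> (\<Sum>i\<in>Z. phi (a' i + b' i))"
proof -
  show "(\<Sum>i\<in>Z. phi (b i)) \<le> (\<Sum>i\<in>Z. phi (b' i))"
  proof (rule tail_sum[OF fin mono])
    fix r
    have "{i\<in>Z. r < b i} = {i\<in>Z. Suc r \<le> b i}" "{i\<in>Z. r < b' i} = {i\<in>Z. Suc r \<le> b' i}" by auto
    thus "card {i\<in>Z. r < b i} \<le> card {i\<in>Z. r < b' i}" using td[of "Suc r"] by simp
  qed
  have td2: "card {i\<in>Z. b' i < v} \<le> card {i\<in>Z. b i < v}" for v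
  proof -
    have "card {i\<in>Z. v \<le> b i} + card {i\<in>Z. b i < v} = card Z"
      using card_split[OF fin, of "\<lambda>i. v \<le> b i"] by (simp add: not_le)
    moreover have "card {i\<in>Z. v \<le> b' i} + card {i\<in>Z. b' i < v} = card Z"
      using card_split[OF fin, of "\<lambda>i. v \<le> b' i"] by (simp add: not_le)
    ultimately show ?thesis using td[of v] by linarith
  qed
  show "(\<Sum>i\<in>Z. phi (a i + b i)) \<le> (\<Sum>i\<in>Z. phi (a' i + b' i))"
  proof (rule tail_sum[OF fin mono])
    fix r
    have c1: "card {i\<in>Z. a' i + b' i \<le> r} \<le> card {i\<in>Z. a i + b i \<le> r}"
      by (rule all_count[OF fin ba ba' co co' td2])
    have "card {i\<in>Z. r < a i + b i} + card {i\<in>Z. a i + b i \<le> r} = card Z"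
      using card_split[OF fin, of "\<lambda>i. r < a i + b i"] by (simp add: not_less)
    moreover have "card {i\<in>Z. r < a' i + b' i} + card {i\<in>Z. a' i + b' i \<le> r} = card Z"
      using card_split[OF fin, of "\<lambda>i. r < a' i + b' i"] by (simp add: not_less)
    ultimately show "card {i\<in>Z. r < a i + b i} \<le> card {i\<in>Z. r < a' i + b' i}" using c1 by linarith
  qed
qed

lemma td_count:
  fixes bE bw :: "nat \<Rightarrow> nat"
  assumes fin: "finite Z" and JZ: "J \<subseteq> Z" and LJ: "JJ \<subseteq> J" and BJ: "B \<subseteq> J" and cB: "card B \<le> card JJ"
    and F1: "\<And>i. i\<in>Z \<Longrightarrow> i \<notin> JJ \<Longrightarrow> i \<notin> B \<Longrightarrow> bE i \<le> bw i"
    and F2: "\<And>i l. i\<in>JJ \<Longrightarrow> l\<in>J \<Longrightarrow> bE i \<le> bw l"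
    and F3: "\<And>i l. i\<in>J \<Longrightarrow> i\<notin>JJ \<Longrightarrow> l\<in>JJ \<Longrightarrow> l\<notin>B \<Longrightarrow> bE i \<le> bw l"
  shows "card {i\<in>Z. v \<le> bE i} \<le> card {i\<in>Z. v \<le> bw i}"
proof -
  define Q where "Q = JJ \<union> B"
  define AE where "AE = {i\<in>Z. v \<le> bE i}"
  define Aw where "Aw = {i\<in>Z. v \<le> bw i}"
  have QZ: "Q \<subseteq> Z" using JZ LJ BJ Q_def by auto
  have finQ: "finite Q" using QZ fin finite_subset by blast
  have finJ: "finite J" using JZ fin finite_subset by blast
  have finL: "finite JJ" using LJ finJ finite_subset by blast
  have finB: "finite B" using BJ finJ finite_subset by blast
  have sE: "card AE = card (AE - Q) + card (AE \<inter> Q)"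
  proof -
    have "AE = (AE - Q) \<union> (AE \<inter> Q)" by auto
    moreover have "card ((AE - Q) \<union> (AE \<inter> Q)) = card (AE - Q) + card (AE \<inter> Q)"
      using fin AE_def by (intro card_Un_disjoint) auto
    ultimately show ?thesis by simp
  qed
  have sw: "card Aw = card (Aw - Q) + card (Aw \<inter> Q)"
  proof -
    have "Aw = (Aw - Q) \<union> (Aw \<inter> Q)" by auto
    moreover have "card ((Aw - Q) \<union> (Aw \<inter> Q)) = card (Aw - Q) + card (Aw \<inter> Q)"
      using fin Aw_def by (intro card_Un_disjoint) auto
    ultimately show ?thesis by simp
  qed
  have P: "card (AE - Q) \<le> card (Aw - Q)"
  proof (rule card_mono)
    show "finite (Aw - Q)" using fin Aw_def by simp
    show "AE - Q \<subseteq> Aw - Q"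
    proof
      fix i assume i: "i \<in> AE - Q"
      hence "i \<in> Z" "i \<notin> JJ" "i \<notin> B" "v \<le> bE i" using AE_def Q_def by auto
      hence "v \<le> bw i" using F1 le_trans by blast
      thus "i \<in> Aw - Q" using i AE_def Aw_def by auto
    qed
  qed
  have QQ: "card (AE \<inter> Q) \<le> card (Aw \<inter> Q)"
  proof (cases "\<exists>i\<in>JJ. v \<le> bE i")
    case True
    then obtain i where i: "i \<in> JJ" "v \<le> bE i" by blast
    have "Q \<subseteq> Aw"
    proof
      fix l assume l: "l \<in> Q"
      hence "l \<in> J" "l \<in> Z" using Q_def LJ BJ JZ by auto
      hence "v \<le> bw l" using F2[OF i(1)] i(2) le_trans by blast
      thus "l \<in> Aw" using Aw_def \<open>l \<in> Z\<close> by simp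
    qed
    hence "Aw \<inter> Q = Q" by auto
    moreover have "card (AE \<inter> Q) \<le> card Q" using finQ by (intro card_mono) auto
    ultimately show ?thesis by simp
  next
    case False
    hence sub: "AE \<inter> Q \<subseteq> B - JJ" using AE_def Q_def by auto
    show ?thesis
    proof (cases "AE \<inter> Q = {}")
      case True thus ?thesis by simp
    next
      case False
      then obtain i where i: "i \<in> AE \<inter> Q" by blast
      hence i2: "i \<in> B" "i \<notin> JJ" "v \<le> bE i" using sub AE_def by auto
      have "JJ - B \<subseteq> Aw \<inter> Q"
      proof
        fix l assume l: "l \<in> JJ - B"
        have "i \<in> J" using i2 BJ by auto
        hence "v \<le> bw l" using F3[of i l] i2 l le_trans by blast
        moreover have "l \<in> Z" using l LJ JZ by auto
        ultimately show "l \<in> Aw \<inter> Q" using l Aw_def Q_def by auto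
      qed
      hence c1: "card (JJ - B) \<le> card (Aw \<inter> Q)" using finQ by (intro card_mono) auto
      have c2: "card (AE \<inter> Q) \<le> card (B - JJ)" using sub finB by (intro card_mono) auto
      have "card (B - JJ) = card B - card (B \<inter> JJ)" using finB by (intro card_Diff_subset_Int) simp
      moreover have "card (JJ - B) = card JJ - card (JJ \<inter> B)" using finL by (intro card_Diff_subset_Int) simp
      moreover have "B \<inter> JJ = JJ \<inter> B" by auto
      ultimately have "card (B - JJ) \<le> card (JJ - B)" using cB by simp
      thus ?thesis using c1 c2 by linarith
    qed
  qed
  show ?thesis using sE sw P QQ AE_def Aw_def by simp
qed




definition bb :: "nat \<Rightarrow> nat set \<Rightarrow> (nat \<Rightarrow> 'a::linorder) \<Rightarrow> nat \<Rightarrow> nat" where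
  "bb n Z y i = card {j\<in>{..<n}-Z. prec y j i}"

lemma rank_rk: "rank n y i = rk {..<n} y i"
  unfolding rank_def rk_def using sum_psi[of "{..<n}" i y] by (simp add: lessThan_def)

lemma tstat_ab:
  assumes Zn: "Z \<subseteq> {..<n}"
  shows "tstat Rank_Ctrl phi n Z y = (\<Sum>i\<in>Z. phi (bb n Z y i))"
    and "tstat Rank_All phi n Z y = (\<Sum>i\<in>Z. phi (rk Z y i + bb n Z y i))"
proof -
  have ZI: "{..<n} \<inter> Z = Z" using Zn by auto
  show "tstat Rank_Ctrl phi n Z y = (\<Sum>i\<in>Z. phi (bb n Z y i))"
    unfolding tstat_def bb_def ZI by (simp add: sum_psi)
  have "rank n y i = rk Z y i + bb n Z y i" for i
  proof -
    have "rank n y i = card {j\<in>{..<n}. prec y j i}" by (simp add: rank_rk rk_def)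
    also have "{j\<in>{..<n}. prec y j i} = {j\<in>Z. prec y j i} \<union> {j\<in>{..<n}-Z. prec y j i}" using Zn by auto
    also have "card \<dots> = card {j\<in>Z. prec y j i} + card {j\<in>{..<n}-Z. prec y j i}"
      using finite_subset[OF Zn] by (intro card_Un_disjoint) auto
    finally show ?thesis by (simp add: rk_def bb_def)
  qed
  thus "tstat Rank_All phi n Z y = (\<Sum>i\<in>Z. phi (rk Z y i + bb n Z y i))"
    unfolding tstat_def ZI by simp
qed

lemma bb_co: "finite Z \<Longrightarrow> i \<in> Z \<Longrightarrow> i' \<in> Z \<Longrightarrow> rk Z y i \<le> rk Z y i' \<Longrightarrow> bb n Z y i \<le> bb n Z y i'"
proof -
  assume a: "finite Z" "i \<in> Z" "i' \<in> Z" "rk Z y i \<le> rk Z y i'"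
  hence p: "prec y i i'" using rk_le_iff by blast
  show ?thesis unfolding bb_def
    by (rule card_mono) (auto intro: prec_trans[OF _ p])
qed

lemma stat_mono:
  fixes phi :: "nat \<Rightarrow> real" and y y' :: "nat \<Rightarrow> 'a::linorder"
  assumes Zn: "Z \<subseteq> {..<n}" and mono: "mono phi"
    and td: "\<And>v. card {i\<in>Z. v \<le> bb n Z y i} \<le> card {i\<in>Z. v \<le> bb n Z y' i}"
  shows "tstat form phi n Z y \<le> tstat form phi n Z y'"
proof -
  have fin: "finite Z" using Zn finite_subset by blast
  note sc = stat_compare[OF fin mono rk_bij[OF fin] rk_bij[OF fin] bb_co[OF fin] bb_co[OF fin] td]
  show ?thesis
    by (cases form) (simp_all only: tstat_ab[OF Zn] sc)
qed

definition Fst :: "stat_form \<Rightarrow> (nat \<Rightarrow> real) \<Rightarrow> nat \<Rightarrow> nat set \<Rightarrow> real" where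
  "Fst form phi n R = (case form of Rank_All \<Rightarrow> (\<Sum>r\<in>R. phi r)
      | Rank_Ctrl \<Rightarrow> (\<Sum>r\<in>R. phi (card {s\<in>{1..n}-R. s \<le> r})))"

lemma tstat_F:
  assumes An: "A \<subseteq> {..<n}"
  shows "tstat form phi n A y = Fst form phi n (rk {..<n} y ` A)"
proof -
  define f where "f = rk {..<n} y"
  have bij: "bij_betw f {..<n} {1..n}" unfolding f_def using rk_bij[of "{..<n}" y] by simp
  have inj: "inj_on f {..<n}" using bij bij_betw_imp_inj_on by blast
  have injA: "inj_on f A" using inj_on_subset[OF inj An] .
  have img: "f ` {..<n} = {1..n}" using bij bij_betw_imp_surj_on by blast
  show ?thesis
  proof (cases form)
    case Rank_All
    have "tstat form phi n A y = (\<Sum>i\<in>A. phi (f i))"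
    proof -
      have AI: "{..<n} \<inter> A = A" using An by auto
      show ?thesis unfolding tstat_def AI f_def using Rank_All by (simp add: rank_rk)
    qed
    also have "\<dots> = (\<Sum>r\<in>f ` A. phi r)" using sum.reindex[OF injA, of phi] by simp
    finally show ?thesis using Rank_All by (simp add: Fst_def f_def)
  next
    case Rank_Ctrl
    have key: "bb n A y i = card {s\<in>{1..n} - f ` A. s \<le> f i}" if i: "i \<in> A" for i
    proof -
      have "f ` ({..<n} - A) = {1..n} - f ` A"
        using inj_on_image_set_diff[OF inj, of "{..<n}" A] An img by auto
      have "f ` {j\<in>{..<n}-A. prec y j i} = {s\<in>{1..n} - f ` A. s \<le> f i}"
      proof -
        have "\<And>j. j \<in> {..<n} \<Longrightarrow> prec y j i \<longleftrightarrow> f j \<le> f i"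
          unfolding f_def using i An by (intro rk_le_iff[symmetric]) auto
        hence "{j\<in>{..<n}-A. prec y j i} = {j\<in>{..<n}-A. f j \<le> f i}" by blast
        moreover have "f ` {j\<in>{..<n}-A. f j \<le> f i} = {s\<in>f ` ({..<n} - A). s \<le> f i}" by blast
        ultimately have "f ` {j\<in>{..<n}-A. prec y j i} = {s\<in>f ` ({..<n} - A). s \<le> f i}" by simp
        thus ?thesis using \<open>f ` ({..<n} - A) = {1..n} - f ` A\<close> by simp
      qed
      note e = this
      have ij: "inj_on f {j\<in>{..<n}-A. prec y j i}" by (rule inj_on_subset[OF inj]) blast
      show ?thesis unfolding bb_def using card_image[OF ij, unfolded e] by (rule sym)
    qed
    have "tstat form phi n A y = (\<Sum>i\<in>A. phi (card {s\<in>{1..n} - f ` A. s \<le> f i}))"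
      unfolding Rank_Ctrl tstat_ab(1)[OF An] by (rule sum.cong) (simp_all add: key)
    also have "\<dots> = (\<Sum>r\<in>f ` A. phi (card {s\<in>{1..n} - f ` A. s \<le> r}))"
      using sum.reindex[OF injA, of "\<lambda>r. phi (card {s\<in>{1..n} - f ` A. s \<le> r})"] by simp
    finally show ?thesis using Rank_Ctrl by (simp add: Fst_def f_def)
  qed
qed

lemma count_inv:
  "card {A\<in>cre_space n n1. P (rk {..<n} y ` A)} = card {R. R \<subseteq> {1..n} \<and> card R = n1 \<and> P R}"
proof -
  define f where "f = rk {..<n} y"
  have bij: "bij_betw f {..<n} {1..n}" unfolding f_def using rk_bij[of "{..<n}" y] by simp
  have inj: "inj_on f {..<n}" using bij bij_betw_imp_inj_on by blast
  have img: "f ` {..<n} = {1..n}" using bij bij_betw_imp_surj_on by blast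
  define LHS where "LHS = {A\<in>cre_space n n1. P (f ` A)}"
  have injL: "inj_on (image f) LHS"
  proof (rule inj_onI)
    fix A A' assume a: "A \<in> LHS" "A' \<in> LHS" "f ` A = f ` A'"
    have "A \<subseteq> {..<n}" "A' \<subseteq> {..<n}" using a(1,2) unfolding LHS_def cre_space_def by simp_all
    thus "A = A'" using inj_on_image_eq_iff[OF inj] a(3) by metis
  qed
  have "image f ` LHS = {R. R \<subseteq> {1..n} \<and> card R = n1 \<and> P R}"
  proof
    show "image f ` LHS \<subseteq> {R. R \<subseteq> {1..n} \<and> card R = n1 \<and> P R}"
    proof
      fix R assume "R \<in> image f ` LHS"
      then obtain A where A: "A \<in> LHS" "R = f ` A" by blast
      have An: "A \<subseteq> {..<n}" "card A = n1" "P (f ` A)" using A(1) unfolding LHS_def cre_space_def by simp_all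
      have "card (f ` A) = card A" using card_image[OF inj_on_subset[OF inj An(1)]] .
      moreover have "f ` A \<subseteq> {1..n}" using An(1) img by blast
      ultimately show "R \<in> {R. R \<subseteq> {1..n} \<and> card R = n1 \<and> P R}" using A An by simp
    qed
  next
    show "{R. R \<subseteq> {1..n} \<and> card R = n1 \<and> P R} \<subseteq> image f ` LHS"
    proof
      fix R assume R: "R \<in> {R. R \<subseteq> {1..n} \<and> card R = n1 \<and> P R}"
      define A where "A = {i\<in>{..<n}. f i \<in> R}"
      have fA: "f ` A = R"
      proof
        show "f ` A \<subseteq> R" unfolding A_def by blast
        show "R \<subseteq> f ` A"
        proof
          fix x assume x: "x \<in> R"
          hence "x \<in> f ` {..<n}" using R img by auto
          then obtain i where "i < n" "f i = x" by auto
          thus "x \<in> f ` A" using x unfolding A_def by blast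
        qed
      qed
      have An: "A \<subseteq> {..<n}" unfolding A_def by auto
      have "card A = card (f ` A)" using card_image[OF inj_on_subset[OF inj An]] by simp
      hence "card A = n1" using fA R by simp
      hence "A \<in> LHS" using An fA R unfolding LHS_def cre_space_def by simp
      thus "R \<in> image f ` LHS" using fA by blast
    qed
  qed
  hence "card {R. R \<subseteq> {1..n} \<and> card R = n1 \<and> P R} = card LHS" using card_image[OF injL] by simp
  thus ?thesis unfolding LHS_def f_def by simp
qed

lemma G_inv:
  fixes w :: "nat \<Rightarrow> ereal"
  shows   "G_tail form phi n n1 y0 c = prob_cre n n1 (\<lambda>A. c \<le> tstat form phi n A w)"
proof -
  have "\<And>y :: nat \<Rightarrow> ereal. card {A\<in>cre_space n n1. c \<le> tstat form phi n A y}
         = card {R. R \<subseteq> {1..n} \<and> card R = n1 \<and> c \<le> Fst form phi n R}"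
  proof -
    fix y :: "nat \<Rightarrow> ereal"
    have "{A\<in>cre_space n n1. c \<le> tstat form phi n A y} = {A\<in>cre_space n n1. c \<le> Fst form phi n (rk {..<n} y ` A)}"
      unfolding cre_space_def by (auto simp: tstat_F)
    thus "card {A\<in>cre_space n n1. c \<le> tstat form phi n A y}
         = card {R. R \<subseteq> {1..n} \<and> card R = n1 \<and> c \<le> Fst form phi n R}"
      using count_inv[of n n1 "\<lambda>R. c \<le> Fst form phi n R" y] by simp
  qed
  note h = this
  show ?thesis unfolding G_tail_def prob_cre_def using h[of w] h[of "\<lambda>i. ereal (y0 i)"] by simp
qed




lemma valid:
  fixes T :: "nat set \<Rightarrow> real" and \<Omega> :: "nat set set"
  assumes fin: "finite \<Omega>" and al: "0 \<le> alpha"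
  shows "real (card {Z\<in>\<Omega>. real (card {A\<in>\<Omega>. T Z \<le> T A}) / real (card \<Omega>) \<le> alpha}) / real (card \<Omega>) \<le> alpha"
proof -
  define S where "S = {Z\<in>\<Omega>. real (card {A\<in>\<Omega>. T Z \<le> T A}) / real (card \<Omega>) \<le> alpha}"
  show ?thesis
  proof (cases "S = {}")
    case True
    hence "card S = 0" by simp
    thus ?thesis using al unfolding S_def by simp
  next
    case False
    have finS: "finite S" using fin S_def by simp
    have "Min (T ` S) \<in> T ` S" using finS False by (intro Min_in) auto
    then obtain Z0 where Z0: "Z0 \<in> S" "T Z0 = Min (T ` S)" by auto
    have mn: "\<forall>Z\<in>S. T Z0 \<le> T Z" using Z0 finS by auto
    have pos: "card \<Omega> > 0" using Z0(1) fin S_def card_gt_0_iff by blast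
    have "S \<subseteq> {A\<in>\<Omega>. T Z0 \<le> T A}" using mn S_def by auto
    hence "card S \<le> card {A\<in>\<Omega>. T Z0 \<le> T A}" using fin by (intro card_mono) auto
    hence "real (card S) / real (card \<Omega>) \<le> real (card {A\<in>\<Omega>. T Z0 \<le> T A}) / real (card \<Omega>)"
      by (intro divide_right_mono) auto
    also have "\<dots> \<le> alpha" using Z0(1) S_def by simp
    finally show ?thesis unfolding S_def .
  qed
qed

lemma bij_top_card:
  assumes "bij_betw f A {1..m}" "L \<le> m"
  shows "card {x\<in>A. m - L < f x} = L"
proof -
  have inj: "inj_on f {x\<in>A. m - L < f x}" by (rule inj_on_subset[OF bij_betw_imp_inj_on[OF assms(1)]]) auto
  have "f ` {x\<in>A. m - L < f x} = {m - L<..m}"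
  proof
    show "f ` {x\<in>A. m - L < f x} \<subseteq> {m - L<..m}"
    proof
      fix s assume "s \<in> f ` {x\<in>A. m - L < f x}"
      then obtain x where x: "x \<in> A" "m - L < f x" "s = f x" by auto
      have "f x \<in> {1..m}" using bij_betwE[OF assms(1)] x(1) by blast
      thus "s \<in> {m - L<..m}" using x by simp
    qed
    show "{m - L<..m} \<subseteq> f ` {x\<in>A. m - L < f x}"
    proof
      fix s assume s: "s \<in> {m - L<..m}"
      hence "s \<in> f ` A" using bij_betw_imp_surj_on[OF assms(1)] by auto
      then obtain x where "x \<in> A" "f x = s" by auto
      thus "s \<in> f ` {x\<in>A. m - L < f x}" using s by auto
    qed
  qed
  hence "card {x\<in>A. m - L < f x} = card {m - L<..m}" using card_image[OF inj] by simp
  thus ?thesis using assms(2) by simp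
qed

lemma prec_transfer:
  fixes wj Ej Ei el wl :: "'a::linorder"
  assumes "wj \<le> Ej" "Ej < Ei \<or> (Ej = Ei \<and> j \<le> i)" "Ei \<le> el" "el \<le> wl" "Ei = el \<longrightarrow> i \<le> (l::nat)"
  shows "wj < wl \<or> (wj = wl \<and> j \<le> l)"
proof (cases "wj < wl")
  case True thus ?thesis by simp
next
  case False
  have "Ej \<le> Ei" using assms(2) by auto
  hence c: "wj \<le> wl" using assms(1,3,4) by (meson order_trans)
  hence eq: "wj = wl" using False by simp
  hence "Ej = Ei" "Ei = el" using assms(1,3,4) \<open>Ej \<le> Ei\<close> by (meson antisym order_trans)+
  hence "j \<le> i" "i \<le> l" using assms(2,5) by auto
  thus ?thesis using eq by simp
qed

lemma bb_le:
  assumes "\<And>j. j \<in> {..<n} - Z \<Longrightarrow> prec E j i \<Longrightarrow> prec w j l"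
  shows "bb n Z E i \<le> bb n Z w l"
  unfolding bb_def using assms by (intro card_mono) auto




definition wv :: "mechanism \<Rightarrow> (nat \<Rightarrow> real) \<Rightarrow> (nat \<Rightarrow> bool) \<Rightarrow> (nat \<Rightarrow> bool) \<Rightarrow> nat \<Rightarrow> ereal" where
  "wv mech Y0 M1 M0 i = (case mech of Mech_g \<Rightarrow> ereal (Y0 i)
     | Mech_mp \<Rightarrow> (if M1 i then ereal (Y0 i) else PInfty)
     | Mech_mn \<Rightarrow> (if M0 i then ereal (Y0 i) else MInfty))"

lemma Et_treated: "i \<in> Z \<Longrightarrow> Ytilde mech Y1 Y0 M1 M0 Z d i =
   (if M1 i then ereal (Y1 i - d i) else (case mech of Mech_g \<Rightarrow> MInfty | Mech_mp \<Rightarrow> PInfty | Mech_mn \<Rightarrow> MInfty))"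
  by (simp add: Ytilde_def obsM_def obsY_def)

lemma Et_ctrl: "i \<notin> Z \<Longrightarrow> Ytilde mech Y1 Y0 M1 M0 Z d i =
   (if M0 i then ereal (Y0 i) else (case mech of Mech_g \<Rightarrow> PInfty | Mech_mp \<Rightarrow> PInfty | Mech_mn \<Rightarrow> MInfty))"
  by (simp add: Ytilde_def obsM_def obsY_def)

lemma ctrl_ge:
  assumes "mech = Mech_mp \<longrightarrow> (\<forall>i<n. M0 i \<longrightarrow> M1 i)" "j < n" "j \<notin> Z"
  shows "wv mech Y0 M1 M0 j \<le> Ytilde mech Y1 Y0 M1 M0 Z d j"
  using assms by (cases mech) (auto simp: Et_ctrl wv_def)

lemma miss_le:
  assumes "i \<in> Z" "\<not> M1 i"
  shows "Ytilde mech Y1 Y0 M1 M0 Z d i \<le> wv mech Y0 M1 M0 i"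
  using assms by (cases mech) (auto simp: Et_treated wv_def)

lemma obs_w:
  assumes "mech = Mech_mn \<longrightarrow> (\<forall>i<n. M1 i \<longrightarrow> M0 i)" "i < n" "M1 i"
  shows "wv mech Y0 M1 M0 i = ereal (Y0 i)"
  using assms by (cases mech) (auto simp: wv_def)

lemma xi_val: "xi n n1 Y1 Y0 M1 M0 Z kappa k c i =
  (if i \<in> JL n Y1 Y0 M1 M0 Z (min (n1 - k) (card (Jset n M1 M0 Z)))
   then Max (obsY Y1 Y0 Z ` Jset n M1 M0 Z) - Min (obsY Y1 Y0 Z ` {l. l < n \<and> l \<notin> Z \<and> obsM M1 M0 Z l}) + kappa
   else c)"
  by (simp add: xi_def Let_def)

lemma JL_rk: "JL n Y1 Y0 M1 M0 Z L = {i\<in>Jset n M1 M0 Z. card (Jset n M1 M0 Z) - L < rk (Jset n M1 M0 Z) (obsY Y1 Y0 Z) i}"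
proof -
  have f: "finite (Jset n M1 M0 Z)" unfolding Jset_def by simp
  show ?thesis unfolding JL_def Let_def rk_def by (simp add: sum_psi[OF f, of _ "obsY Y1 Y0 Z"])
qed




lemma per_Z:
  fixes phi :: "nat \<Rightarrow> real"
  assumes Zc: "Z \<in> cre_space n n1" and H: "Hnull n n1 Y1 Y0 k c Z" and mono: "mono phi"
    and mpA: "mech = Mech_mp \<longrightarrow> (\<forall>i<n. M0 i \<longrightarrow> M1 i)"
    and mnA: "mech = Mech_mn \<longrightarrow> (\<forall>i<n. M1 i \<longrightarrow> M0 i)"
    and kp: "kappa > 0"
  shows "tstat form phi n Z (Ytilde mech Y1 Y0 M1 M0 Z (xi n n1 Y1 Y0 M1 M0 Z kappa k c))
         \<le> tstat form phi n Z (wv mech Y0 M1 M0)"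
proof -
  define J where "J = Jset n M1 M0 Z"
  define Y where "Y = obsY Y1 Y0 Z"
  define L where "L = min (n1 - k) (card J)"
  define JJ where "JJ = JL n Y1 Y0 M1 M0 Z L"
  define Cobs where "Cobs = {l. l < n \<and> l \<notin> Z \<and> obsM M1 M0 Z l}"
  define D where "D = Max (Y ` J) - Min (Y ` Cobs) + kappa"
  define xv where "xv = xi n n1 Y1 Y0 M1 M0 Z kappa k c"
  define E where "E = Ytilde mech Y1 Y0 M1 M0 Z xv"
  define w where "w = wv mech Y0 M1 M0"
  define B where "B = {i\<in>J. Y1 i - Y0 i > c}"
  have Zn: "Z \<subseteq> {..<n}" using Zc unfolding cre_space_def by simp
  have finZ: "finite Z" using Zn finite_subset by blast
  have J_iff: "\<And>i. i \<in> J \<longleftrightarrow> i \<in> Z \<and> M1 i"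
    unfolding J_def Jset_def obsM_def using Zn by auto
  have JZ: "J \<subseteq> Z" using J_iff by blast
  have finJ: "finite J" using JZ finZ finite_subset by blast
  have Yt: "\<And>i. i \<in> Z \<Longrightarrow> Y i = Y1 i" unfolding Y_def obsY_def by simp
  have JJ_eq: "JJ = {i\<in>J. card J - L < rk J Y i}"
    unfolding JJ_def J_def Y_def by (rule JL_rk)
  have JJJ: "JJ \<subseteq> J" using JJ_eq by blast
  have LJ: "L \<le> card J" unfolding L_def by simp
  have cJJ: "card JJ = L" unfolding JJ_eq using bij_top_card[OF rk_bij[OF finJ] LJ] .
  have order: "prec Y i l" if "i \<in> J" "i \<notin> JJ" "l \<in> JJ" for i l
  proof -
    have "rk J Y i \<le> card J - L" using that JJ_eq by auto
    moreover have "card J - L < rk J Y l" using that JJ_eq by auto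
    ultimately have "\<not> prec Y l i" using rk_mono[OF finJ, of Y l i] by linarith
    thus ?thesis by (rule prec_total)
  qed
  have xv_eq: "\<And>i. xv i = (if i \<in> JJ then D else c)"
    unfolding xv_def xi_val JJ_def L_def J_def D_def Y_def Cobs_def by simp
  have E_tr: "\<And>i. i \<in> J \<Longrightarrow> E i = ereal (Y1 i - xv i)"
    unfolding E_def using J_iff Et_treated by simp
  have w_J: "\<And>i. i \<in> J \<Longrightarrow> w i = ereal (Y0 i)"
    unfolding w_def using J_iff Zn obs_w[OF mnA] by blast
  have ctrl: "\<And>j. j \<in> {..<n} - Z \<Longrightarrow> w j \<le> E j"
    unfolding w_def E_def using ctrl_ge[OF mpA] by blast
  have cB: "card B \<le> card JJ"
  proof -
    have "B \<subseteq> {i. i < n \<and> i \<in> Z \<and> Y1 i - Y0 i > c}" unfolding B_def using JZ Zn by auto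
    hence "card B \<le> card {i. i < n \<and> i \<in> Z \<and> Y1 i - Y0 i > c}" by (intro card_mono) auto
    also have "\<dots> \<le> n1 - k" using H unfolding Hnull_def .
    finally have "card B \<le> n1 - k" .
    moreover have "card B \<le> card J" unfolding B_def using finJ by (intro card_mono) auto
    ultimately show ?thesis using cJJ L_def by simp
  qed
  have BJ: "B \<subseteq> J" unfolding B_def by blast
  have F1: "bb n Z E i \<le> bb n Z w i" if i: "i \<in> Z" "i \<notin> JJ" "i \<notin> B" for i
  proof -
    have Ew: "E i \<le> w i"
    proof (cases "M1 i")
      case True
      hence iJ: "i \<in> J" using J_iff i by simp
      have "E i = ereal (Y1 i - c)" using E_tr[OF iJ] xv_eq i by simp
      moreover have "Y1 i - Y0 i \<le> c" using i iJ B_def by auto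
      ultimately show ?thesis using w_J[OF iJ] by simp
    next
      case False
      thus ?thesis unfolding E_def w_def using miss_le i by blast
    qed
    show ?thesis
    proof (rule bb_le)
      fix j assume j: "j \<in> {..<n} - Z" "prec E j i"
      have "w j < w i \<or> (w j = w i \<and> j \<le> i)"
        using prec_transfer[OF ctrl[OF j(1)] j(2)[unfolded prec_def] Ew order.refl] by simp
      thus "prec w j i" unfolding prec_def .
    qed
  qed
  have F2: "bb n Z E i \<le> bb n Z w l" if il: "i \<in> JJ" "l \<in> J" for i l
  proof (rule bb_le)
    fix j assume j: "j \<in> {..<n} - Z" "prec E j i"
    have iJ: "i \<in> J" using il JJJ by blast
    have Ei: "E i = ereal (Y1 i - D)" using E_tr[OF iJ] xv_eq il by simp
    have Eji: "E j \<le> E i" using j(2) unfolding prec_def by auto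
    have EjM: "E j = MInfty"
    proof (cases "M0 j")
      case True
      have jn: "j < n" "j \<notin> Z" using j by auto
      hence Ej: "E j = ereal (Y0 j)" unfolding E_def using Et_ctrl True by simp
      have jC: "j \<in> Cobs" unfolding Cobs_def obsM_def using jn True by simp
      have finC: "finite Cobs" unfolding Cobs_def by simp
      have "Min (Y ` Cobs) \<le> Y j" using finC jC by (intro Min_le) auto
      hence mn: "Min (Y ` Cobs) \<le> Y0 j" unfolding Y_def obsY_def using jn by simp
      have "Y i \<le> Max (Y ` J)" using finJ iJ by (intro Max_ge) auto
      hence mx: "Y1 i \<le> Max (Y ` J)" using Yt iJ JZ by auto
      have "Y1 i - D < Y0 j" using mn mx kp unfolding D_def by simp
      moreover have "Y0 j \<le> Y1 i - D" using Eji Ej Ei by simp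
      ultimately show ?thesis by simp
    next
      case False
      have jn: "j \<notin> Z" using j by auto
      hence Ej: "E j = (case mech of Mech_g \<Rightarrow> PInfty | Mech_mp \<Rightarrow> PInfty | Mech_mn \<Rightarrow> MInfty)"
        unfolding E_def using Et_ctrl False by simp
      show ?thesis
      proof (cases mech)
        case Mech_g thus ?thesis using Ej Eji Ei by simp
      next
        case Mech_mp thus ?thesis using Ej Eji Ei by simp
      next
        case Mech_mn thus ?thesis using Ej by simp
      qed
    qed
    have "w j = MInfty" using ctrl[OF j(1)] EjM by simp
    moreover have "w l = ereal (Y0 l)" using w_J il by simp
    ultimately show "prec w j l" unfolding prec_def by simp
  qed
  have F3: "bb n Z E i \<le> bb n Z w l" if il: "i \<in> J" "i \<notin> JJ" "l \<in> JJ" "l \<notin> B" for i l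
  proof (rule bb_le)
    fix j assume j: "j \<in> {..<n} - Z" "prec E j i"
    have lJ: "l \<in> J" using il JJJ by blast
    have Ei: "E i = ereal (Y1 i - c)" using E_tr[OF il(1)] xv_eq il by simp
    have p: "prec Y i l" using order il by blast
    have el: "ereal (Y1 l - c) \<le> w l" using w_J[OF lJ] il(4) lJ B_def by auto
    have Yi: "Y i = Y1 i" using Yt il(1) JZ by blast
    have Yl: "Y l = Y1 l" using Yt lJ JZ by blast
    have p2: "Y1 i < Y1 l \<or> (Y1 i = Y1 l \<and> i \<le> l)" using p Yi Yl unfolding prec_def by simp
    have le: "E i \<le> ereal (Y1 l - c)" using p2 Ei by auto
    have imp: "E i = ereal (Y1 l - c) \<longrightarrow> i \<le> l" using p2 Ei by auto
    have "w j < w l \<or> (w j = w l \<and> j \<le> l)"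
      using prec_transfer[OF ctrl[OF j(1)] j(2)[unfolded prec_def] le el imp] .
    thus "prec w j l" unfolding prec_def .
  qed
  have td: "card {i\<in>Z. v \<le> bb n Z E i} \<le> card {i\<in>Z. v \<le> bb n Z w i}" for v
    by (rule td_count[OF finZ JZ JJJ BJ cB F1 F2 F3])
  have "tstat form phi n Z E \<le> tstat form phi n Z w"
    by (rule stat_mono[OF Zn mono td])
  thus ?thesis unfolding E_def w_def xv_def .
qed




theorem theorem6:
  fixes n n1 k :: nat and Y1 Y0 :: "nat \<Rightarrow> real" and M1 M0 :: "nat \<Rightarrow> bool"
    and mech :: mechanism and form :: stat_form and phi :: "nat \<Rightarrow> real"
    and y0 :: "nat \<Rightarrow> real" and c kappa alpha :: real
  assumes "0 < n1" and "n1 < n"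
    and "mono phi"
    and "mech = Mech_mp \<longrightarrow> (\<forall>i<n. M0 i \<longrightarrow> M1 i)"
    and "mech = Mech_mn \<longrightarrow> (\<forall>i<n. M1 i \<longrightarrow> M0 i)"
    and "1 \<le> k" and "k \<le> n1"
    and "kappa > 0"
    and "0 < alpha" and "alpha < 1"
  shows "prob_cre n n1 (\<lambda>Z. pval form phi mech n n1 y0 Y1 Y0 M1 M0 kappa k c Z \<le> alpha
                              \<and> Hnull n n1 Y1 Y0 k c Z) \<le> alpha"
proof -
  define \<Omega> where "\<Omega> = cre_space n n1"
  define T where "T = (\<lambda>Z. tstat form phi n Z (wv mech Y0 M1 M0))"
  have fin: "finite \<Omega>"
  proof -
    have "\<Omega> \<subseteq> Pow {..<n}" unfolding \<Omega>_def cre_space_def by auto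
    thus ?thesis using finite_subset by blast
  qed
  have G: "\<And>x. G_tail form phi n n1 y0 x = real (card {A\<in>\<Omega>. x \<le> T A}) / real (card \<Omega>)"
    unfolding G_inv[of form phi n n1 y0 _ "wv mech Y0 M1 M0"] prob_cre_def \<Omega>_def T_def ..
  define S1 where "S1 = {Z\<in>\<Omega>. pval form phi mech n n1 y0 Y1 Y0 M1 M0 kappa k c Z \<le> alpha
                              \<and> Hnull n n1 Y1 Y0 k c Z}"
  define S2 where "S2 = {Z\<in>\<Omega>. real (card {A\<in>\<Omega>. T Z \<le> T A}) / real (card \<Omega>) \<le> alpha}"
  have "S1 \<subseteq> S2"
  proof
    fix Z assume Z: "Z \<in> S1"
    hence Zc: "Z \<in> cre_space n n1" and H: "Hnull n n1 Y1 Y0 k c Z"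
      and p: "pval form phi mech n n1 y0 Y1 Y0 M1 M0 kappa k c Z \<le> alpha"
      unfolding S1_def \<Omega>_def by auto
    define tE where "tE = tstat form phi n Z (Ytilde mech Y1 Y0 M1 M0 Z (xi n n1 Y1 Y0 M1 M0 Z kappa k c))"
    have le: "tE \<le> T Z" unfolding tE_def T_def
      using per_Z[OF Zc H assms(3) assms(4) assms(5) assms(8)] .
    have "card {A\<in>\<Omega>. T Z \<le> T A} \<le> card {A\<in>\<Omega>. tE \<le> T A}"
      using fin le by (intro card_mono) auto
    hence "real (card {A\<in>\<Omega>. T Z \<le> T A}) / real (card \<Omega>) \<le> real (card {A\<in>\<Omega>. tE \<le> T A}) / real (card \<Omega>)"
      by (intro divide_right_mono) auto
    also have "\<dots> = pval form phi mech n n1 y0 Y1 Y0 M1 M0 kappa k c Z"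
      unfolding pval_def tE_def G ..
    finally show "Z \<in> S2" using p Z unfolding S2_def S1_def by auto
  qed
  hence "card S1 \<le> card S2" using fin S2_def by (intro card_mono) auto
  hence "real (card S1) / real (card \<Omega>) \<le> real (card S2) / real (card \<Omega>)"
    by (intro divide_right_mono) auto
  also have "\<dots> \<le> alpha" unfolding S2_def using valid[OF fin, of alpha T] assms(9) by simp
  finally show ?thesis unfolding prob_cre_def S1_def \<Omega>_def .
qed


end
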